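(* Let $F_t$, $t\in[0,1]$, be a one-parameter family on a complete metric space $(\mathbb X,d)$ satisfying (H1), (H2), (H3), and let $J=\{1\le i\le N:\mathrm{Lip}(f_{(i,1)},d)=1\}$. If the monoid $\mathbb M(\{f_{(i,1)}:i\in J\})$ is compact, then the lower transition attractor $A_\bullet$ of $F_t$ is compact.
   Context: Let $(\mathbb X,d)$ be a complete metric space. A one-parameter family is $F_t=\{f_{(1,t)},\dots,f_{(N,t)}\}$, $t\in[0,1]$, $N\ge2$, of continuous self-maps of $\mathbb X$. $\mathrm{Lip}(f,d)=\sup_{x\ne y}d(f(x),f(y))/d(x,y)$ and $\mathrm{Lip}(F_t,d)=\max_i\mathrm{Lip}(f_{(i,t)},d)$. Conditions: (H1) for every $x\in\mathbb X$ and every $i$, the map $t\mapsto f_{(i,t)}(x)$ is continuous on $[0,1]$; (H2) $\mathrm{Lip}(F_t,d)<1$ for all $t\in[0,1)$; (H3) for each $i$ the limit $q_i=\lim_{t\to1^-}q_{i,t}$ exists, where $q_{i,t}$ is the unique fixed point of $f_{(i,t)}$ for $t\in[0,1)$; $Q=\{q_1,\dots,q_N\}$. For an IFS $F$ (a finite or infinite family of continuous self-maps) and $S\subseteq\mathbb X$, the Hutchinson operator is $F(S)=\overline{\bigcup_{f\in F}f(S)}$. The lower transition attractor of $F_t$ is the smallest (w.r.t. inclusion) set $A_\bullet\subseteq\mathbb X$ with $F_1(A_\bullet)=A_\bullet$ and $Q\subseteq A_\bullet$. An IFS $F$ is compact if $F(K)$ is compact for every compact $K\subseteq\mathbb X$.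 The monoid of $F$ is $\mathbb M(F)=\{f_1\circ\cdots\circ f_k:f_j\in F,k\in\mathbb N\}\cup\{\mathrm{id}_{\mathbb X}\}$, regarded as an IFS. *)

theory Defs
  imports "HOL-Analysis.Analysis"
begin

definition Lip :: "('a::metric_space \<Rightarrow> 'b::metric_space) \<Rightarrow> ereal" where
  "Lip f = (SUP p \<in> {(x, y). x \<noteq> y}. ereal (dist (f (fst p)) (f (snd p)) / dist (fst p) (snd p)))"

definition hutchinson :: "('a::topological_space \<Rightarrow> 'a) set \<Rightarrow> 'a set \<Rightarrow> 'a set" where
  "hutchinson F S = closure (\<Union>g\<in>F. g ` S)"

definition compact_IFS :: "('a::topological_space \<Rightarrow> 'a) set \<Rightarrow> bool" where
  "compact_IFS F \<longleftrightarrow> (\<forall>K. compact K \<longrightarrow> compact (hutchinson F K))"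

inductive_set monoid_IFS :: "('a \<Rightarrow> 'a) set \<Rightarrow> ('a \<Rightarrow> 'a) set" for F where
  monoid_id: "id \<in> monoid_IFS F"
| monoid_comp: "g \<in> F \<Longrightarrow> h \<in> monoid_IFS F \<Longrightarrow> g \<circ> h \<in> monoid_IFS F"

definition is_lower_transition_attractor ::
  "('a::topological_space \<Rightarrow> 'a) set \<Rightarrow> 'a set \<Rightarrow> 'a set \<Rightarrow> bool" where
  "is_lower_transition_attractor F1 Q A \<longleftrightarrow>
     hutchinson F1 A = A \<and> Q \<subseteq> A \<and>
     (\<forall>B. hutchinson F1 B = B \<and> Q \<subseteq> B \<longrightarrow> A \<subseteq> B)"

end

theory Submission
  imports Defs
begin

inductive_set orb :: "('a \<Rightarrow> 'a) set \<Rightarrow> 'a set \<Rightarrow> 'a set" for F Q where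
  orb_base: "q \<in> Q \<Longrightarrow> q \<in> orb F Q"
| orb_step: "x \<in> orb F Q \<Longrightarrow> g \<in> F \<Longrightarrow> g x \<in> orb F Q"

lemma hut_mono: "S \<subseteq> T \<Longrightarrow> hutchinson F S \<subseteq> hutchinson F T"
  unfolding hutchinson_def by (intro closure_mono) blast

lemma hut_M_sub: "S \<subseteq> hutchinson (monoid_IFS G) S"
  unfolding hutchinson_def
proof -
  have "S \<subseteq> (\<Union>g\<in>monoid_IFS G. g ` S)"
    using monoid_IFS.monoid_id[of G] by (auto intro!: bexI[of _ id])
  then show "S \<subseteq> closure (\<Union>g\<in>monoid_IFS G. g ` S)" using closure_subset by blast
qed

lemma hut_M_inv:
  assumes "g \<in> G" "continuous_on UNIV g"
  shows "g ` hutchinson (monoid_IFS G) S \<subseteq> hutchinson (monoid_IFS G) S"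
  unfolding hutchinson_def
proof (rule image_closure_subset)
  show "continuous_on (closure (\<Union>h\<in>monoid_IFS G. h ` S)) g"
    using assms(2) continuous_on_subset by blast
  show "closed (closure (\<Union>h\<in>monoid_IFS G. h ` S))" by simp
  show "g ` (\<Union>h\<in>monoid_IFS G. h ` S) \<subseteq> closure (\<Union>h\<in>monoid_IFS G. h ` S)"
  proof
    fix y assume "y \<in> g ` (\<Union>h\<in>monoid_IFS G. h ` S)"
    then obtain h x where h: "h \<in> monoid_IFS G" "x \<in> S" "y = g (h x)" by auto
    then have "g \<circ> h \<in> monoid_IFS G" using assms(1) monoid_IFS.monoid_comp by blast
    moreover have "y \<in> (g \<circ> h) ` S" using h(2) unfolding h(3) comp_def by (rule imageI)
    ultimately have "y \<in> (\<Union>h\<in>monoid_IFS G. h ` S)" by blast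
    then show "y \<in> closure (\<Union>h\<in>monoid_IFS G. h ` S)" by (rule subsetD[OF closure_subset])
  qed
qed

lemma core:
  fixes F G :: "('a::complete_space \<Rightarrow> 'a) set" and Q :: "'a set" and c :: real
  assumes finF: "finite F" and finQ: "finite Q" and GF: "G \<subseteq> F"
    and contF: "\<forall>g\<in>F. continuous_on UNIV g"
    and ne: "\<forall>g\<in>F. \<forall>x y. dist (g x) (g y) \<le> dist x y"
    and c0: "0 \<le> c" and c1: "c < 1"
    and contr: "\<forall>g\<in>F. g \<notin> G \<longrightarrow> (\<forall>x y. dist (g x) (g y) \<le> c * dist x y)"
    and fx: "\<forall>g\<in>F. \<exists>q\<in>Q. g q = q"
    and Mc: "compact_IFS (monoid_IFS G)"
  shows "compact (closure (orb F Q))"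
proof -
  define M where "M = monoid_IFS G"
  have Mc': "\<And>K. compact K \<Longrightarrow> compact (hutchinson M K)"
    using Mc unfolding compact_IFS_def M_def by blast
  have inv: "\<And>g S. g \<in> G \<Longrightarrow> g ` hutchinson M S \<subseteq> hutchinson M S"
    unfolding M_def using hut_M_inv contF GF by blast
  have sub: "\<And>S. S \<subseteq> hutchinson M S" unfolding M_def by (rule hut_M_sub)
  define K0 where "K0 = hutchinson M Q"
  have K0c: "compact K0" unfolding K0_def using Mc' finQ finite_imp_compact by blast
  define D where "D = diameter K0"
  have Dle: "\<And>x y. x \<in> K0 \<Longrightarrow> y \<in> K0 \<Longrightarrow> dist x y \<le> D"
    unfolding D_def using diameter_bounded_bound compact_imp_bounded K0c by blast
  define R where "R = c * D / (1 - c)"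
  have RD: "c * (R + D) = R" using c1 unfolding R_def by (simp add: field_simps)
  have QK0: "Q \<subseteq> K0" unfolding K0_def using sub by blast
  have base: "\<forall>x\<in>orb F Q. \<exists>z\<in>K0. dist x z \<le> R"
  proof
    fix x assume "x \<in> orb F Q"
    then show "\<exists>z\<in>K0. dist x z \<le> R"
    proof (induction rule: orb.induct)
      case (orb_base q)
      have "0 \<le> D" using Dle[of q q] QK0 orb_base by auto
      then have "0 \<le> R" unfolding R_def using c0 c1 by simp
      then show ?case using orb_base QK0 by (intro bexI[of _ q]) auto
    next
      case (orb_step x g)
      then obtain z where z: "z \<in> K0" "dist x z \<le> R" by blast
      show ?case
      proof (cases "g \<in> G")
        case True
        then have "g z \<in> K0" using inv z(1) unfolding K0_def by blast
        moreover have "dist (g x) (g z) \<le> R" using ne \<open>g \<in> F\<close> z(2) by (blast intro: order_trans)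
        ultimately show ?thesis by blast
      next
        case False
        obtain q where q: "q \<in> Q" "g q = q" using fx \<open>g \<in> F\<close> by blast
        have "dist (g x) q = dist (g x) (g q)" using q by simp
        also have "\<dots> \<le> c * dist x q" using contr \<open>g \<in> F\<close> False by blast
        also have "\<dots> \<le> c * (R + D)"
        proof -
          have "dist x q \<le> dist x z + dist z q" by (rule dist_triangle)
          also have "\<dots> \<le> R + D"
          proof -
            have "dist z q \<le> D" using Dle z(1) q(1) QK0 by blast
            then show ?thesis using z(2) by linarith
          qed
          finally show ?thesis using c0 by (simp add: mult_left_mono)
        qed
        finally show ?thesis using RD q QK0 by auto
      qed
    qed
  qed
  have step: "\<exists>L'. compact L' \<and> (\<forall>x\<in>orb F Q. \<exists>z\<in>L'. dist x z \<le> c * r)"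
    if L: "compact L" "\<forall>x\<in>orb F Q. \<exists>z\<in>L. dist x z \<le> r" and r: "0 \<le> r" for L r
  proof -
    define L' where "L' = hutchinson M (Q \<union> (\<Union>g\<in>F-G. g ` L))"
    have "compact (Q \<union> (\<Union>g\<in>F-G. g ` L))"
    proof (intro compact_Un compact_UN)
      show "compact Q" using finQ finite_imp_compact by blast
      show "finite (F - G)" using finF by simp
      show "compact (g ` L)" if "g \<in> F - G" for g
        using that contF L(1) compact_continuous_image continuous_on_subset by blast
    qed
    then have cL': "compact L'" unfolding L'_def using Mc' by blast
    have QL': "Q \<subseteq> L'" unfolding L'_def using sub by blast
    have gL': "g ` L \<subseteq> L'" if "g \<in> F - G" for g
    proof -
      have "g ` L \<subseteq> Q \<union> (\<Union>g\<in>F-G. g ` L)" using that by blast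
      then show ?thesis unfolding L'_def using sub by (rule subset_trans)
    qed
    have "\<forall>x\<in>orb F Q. \<exists>z\<in>L'. dist x z \<le> c * r"
    proof
      fix x assume "x \<in> orb F Q"
      then show "\<exists>z\<in>L'. dist x z \<le> c * r"
      proof (induction rule: orb.induct)
        case (orb_base q)
        then show ?case using QL' c0 r by (intro bexI[of _ q]) auto
      next
        case (orb_step x g)
        show ?case
        proof (cases "g \<in> G")
          case True
          then obtain z where z: "z \<in> L'" "dist x z \<le> c * r" using orb_step by blast
          then have "g z \<in> L'" using inv True unfolding L'_def by blast
          moreover have "dist (g x) (g z) \<le> c * r" using ne \<open>g \<in> F\<close> z(2) by (blast intro: order_trans)
          ultimately show ?thesis by blast
        next
          case False
          obtain w where w: "w \<in> L" "dist x w \<le> r" using L(2) \<open>x \<in> orb F Q\<close> by blast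
          have "g w \<in> L'" using gL' w(1) False \<open>g \<in> F\<close> by blast
          moreover have "dist (g x) (g w) \<le> c * r"
          proof -
            have "dist (g x) (g w) \<le> c * dist x w" using contr \<open>g \<in> F\<close> False by blast
            also have "\<dots> \<le> c * r" using w(2) c0 by (rule mult_left_mono)
            finally show ?thesis .
          qed
          ultimately show ?thesis by blast
        qed
      qed
    qed
    then show ?thesis using cL' by blast
  qed
  have R0: "0 \<le> R"
  proof -
    have "Q \<noteq> {} \<or> F = {}" using fx by auto
    show ?thesis
    proof (cases "K0 = {}")
      case True then show ?thesis unfolding D_def R_def diameter_def by simp
    next
      case False
      then obtain k where "k \<in> K0" by blast
      then have "0 \<le> D" using Dle[of k k] by simp
      then show ?thesis unfolding R_def using c0 c1 by simp
    qed
  qed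
  have iter: "\<exists>L. compact L \<and> (\<forall>x\<in>orb F Q. \<exists>z\<in>L. dist x z \<le> c ^ n * R)" for n
  proof (induction n)
    case 0 then show ?case using K0c base by auto
  next
    case (Suc n)
    then obtain L where "compact L" "\<forall>x\<in>orb F Q. \<exists>z\<in>L. dist x z \<le> c ^ n * R" by blast
    from step[OF this] show ?case using c0 R0 by (simp add: mult.assoc)
  qed
  show ?thesis unfolding compact_eq_totally_bounded
  proof (intro conjI allI impI)
    show "complete (closure (orb F Q))" by (simp add: complete_eq_closed)
    fix e :: real assume e: "e > 0"
    have "(\<lambda>n. c ^ n * R) \<longlonglongrightarrow> 0"
      using c0 c1 by (intro tendsto_mult_left_zero LIMSEQ_power_zero) simp
    then have "\<forall>\<^sub>F n in sequentially. c ^ n * R < e / 4" using e by (intro order_tendstoD) auto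
    then obtain n where n: "c ^ n * R < e / 4" by (auto simp: eventually_sequentially)
    obtain L where L: "compact L" "\<forall>x\<in>orb F Q. \<exists>z\<in>L. dist x z \<le> c ^ n * R" using iter by blast
    have e2: "e/2 > 0" using e by simp
    obtain k where k: "finite k" "L \<subseteq> (\<Union>x\<in>k. ball x (e/2))"
      using seq_compact_imp_totally_bounded[OF compact_imp_seq_compact[OF L(1)]] e2 by blast
    have "closure (orb F Q) \<subseteq> (\<Union>x\<in>k. ball x e)"
    proof
      fix x assume "x \<in> closure (orb F Q)"
      have "e/4 > 0" using e by simp
      then obtain y where y: "y \<in> orb F Q" "dist y x < e/4"
        using \<open>x \<in> closure (orb F Q)\<close> closure_approachable[of x "orb F Q"] \<open>e/4 > 0\<close> by blast
      obtain z where z: "z \<in> L" "dist y z \<le> c ^ n * R" using L y by blast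
      obtain w where w: "w \<in> k" "dist w z < e/2" using k z by (auto simp: ball_def)
      have "dist w x \<le> dist w z + dist z y + dist y x"
        using dist_triangle[of w x z] dist_triangle[of z x y] by linarith
      also have "\<dots> < e" using w z y n by (simp add: dist_commute)
      finally show "x \<in> (\<Union>x\<in>k. ball x e)" using w by auto
    qed
    then show "\<exists>k. finite k \<and> closure (orb F Q) \<subseteq> (\<Union>x\<in>k. ball x e)" using k by blast
  qed
qed

lemma orb_fixed:
  assumes contF: "\<forall>g\<in>F. continuous_on UNIV g" and fx: "\<forall>q\<in>Q. \<exists>g\<in>F. g q = q"
  shows "hutchinson F (closure (orb F Q)) = closure (orb F Q)"
proof
  show "hutchinson F (closure (orb F Q)) \<subseteq> closure (orb F Q)"
    unfolding hutchinson_def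
  proof (rule closure_minimal)
    show "closed (closure (orb F Q))" by simp
    show "(\<Union>g\<in>F. g ` closure (orb F Q)) \<subseteq> closure (orb F Q)"
    proof (rule UN_least)
      fix g assume g: "g \<in> F"
      show "g ` closure (orb F Q) \<subseteq> closure (orb F Q)"
      proof (rule image_closure_subset)
        show "continuous_on (closure (orb F Q)) g" using g contF continuous_on_subset by blast
        show "closed (closure (orb F Q))" by simp
        have "g ` orb F Q \<subseteq> orb F Q" using g by (auto intro: orb.orb_step)
        then show "g ` orb F Q \<subseteq> closure (orb F Q)" using closure_subset by blast
      qed
    qed
  qed
  have "orb F Q \<subseteq> (\<Union>g\<in>F. g ` closure (orb F Q))"
  proof
    fix x assume "x \<in> orb F Q"
    then show "x \<in> (\<Union>g\<in>F. g ` closure (orb F Q))"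
    proof cases
      case orb_base
      then obtain g where "g \<in> F" "g x = x" using fx by blast
      then show ?thesis using \<open>x \<in> orb F Q\<close> closure_subset by (metis UN_iff image_eqI subsetD)
    next
      case (orb_step y g)
      then show ?thesis using closure_subset by blast
    qed
  qed
  then show "closure (orb F Q) \<subseteq> hutchinson F (closure (orb F Q))"
    unfolding hutchinson_def by (rule closure_mono)
qed


lemma Lip_bound:
  assumes "Lip g \<le> ereal r"
  shows "dist (g x) (g y) \<le> r * dist x y"
proof (cases "x = y")
  case True then show ?thesis by simp
next
  case False
  have "ereal (dist (g x) (g y) / dist x y) \<le> Lip g"
    unfolding Lip_def
    using SUP_upper[of "(x, y)" "{(x, y). x \<noteq> y}" "\<lambda>p. ereal (dist (g (fst p)) (g (snd p)) / dist (fst p) (snd p))"] False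
    by simp
  then have "dist (g x) (g y) / dist x y \<le> r" using assms by (meson ereal_less_eq(3) order_trans)
  then show ?thesis using False by (simp add: divide_le_eq)
qed

lemma Lip_le:
  assumes "\<forall>x y. dist (g x) (g y) \<le> r * dist x y"
  shows "Lip g \<le> ereal r"
  unfolding Lip_def
proof (rule SUP_least)
  fix p :: "'a \<times> 'a" assume "p \<in> {(x, y). x \<noteq> y}"
  then have "dist (fst p) (snd p) > 0" by auto
  then have "dist (g (fst p)) (g (snd p)) / dist (fst p) (snd p) \<le> r"
    using assms by (simp add: divide_le_eq)
  then show "ereal (dist (g (fst p)) (g (snd p)) / dist (fst p) (snd p)) \<le> ereal r" by simp
qed

lemma Lip_less1:
  assumes "Lip g < 1"
  shows "\<exists>k. 0 \<le> k \<and> k < 1 \<and> (\<forall>x y. dist (g x) (g y) \<le> k * dist x y)"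
proof -
  obtain r where r: "Lip g < ereal r" "ereal r < 1" using ereal_dense2 assms by blast
  define k where "k = max 0 r"
  have "Lip g \<le> ereal k" using r(1) unfolding k_def by (metis ereal_less_eq(3) less_imp_le max.cobounded2 order_trans)
  then have "\<forall>x y. dist (g x) (g y) \<le> k * dist x y" using Lip_bound by blast
  moreover have "0 \<le> k" "k < 1" using r(2) unfolding k_def by auto
  ultimately show ?thesis by blast
qed

theorem mainTheorem4:
  fixes f :: "nat \<Rightarrow> real \<Rightarrow> 'a::complete_space \<Rightarrow> 'a"
    and N :: nat
    and q :: "nat \<Rightarrow> 'a"
    and A :: "'a set"
  assumes N2: "N \<ge> 2"
    and cont: "\<forall>i\<in>{1..N}. \<forall>t\<in>{0..1}. continuous_on UNIV (f i t)"
    and H1: "\<forall>i\<in>{1..N}. \<forall>x. continuous_on {0..1} (\<lambda>t. f i t x)"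
    and H2: "\<forall>t\<in>{0..<1}. \<forall>i\<in>{1..N}. Lip (f i t) < 1"
    and H3: "\<forall>i\<in>{1..N}. ((\<lambda>t. THE x. f i t x = x) \<longlongrightarrow> q i) (at_left 1)"
    and Mcpt: "compact_IFS (monoid_IFS {f i 1 | i. i \<in> {1..N} \<and> Lip (f i 1) = 1})"
    and A: "is_lower_transition_attractor {f i 1 | i. i \<in> {1..N}} (q ` {1..N}) A"
  shows "compact A"
proof -
  have lim: "((\<lambda>t. f i t x) \<longlongrightarrow> f i 1 x) (at_left 1)" if i: "i \<in> {1..N}" for i x
    using H1 i by (intro continuous_on_Icc_at_leftD[of 0 1 "\<lambda>t. f i t x", simplified]) auto
  have ev: "eventually (\<lambda>t. t \<in> {0<..<1}) (at_left (1::real))"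
    by (rule eventually_at_left_real[OF zero_less_one])
  have cont_t: "\<forall>x y. dist (f i t x) (f i t y) \<le> dist x y" if "i \<in> {1..N}" "t \<in> {0..<1}" for i t
  proof -
    have "Lip (f i t) < 1" using H2 that by simp
    then obtain k where k: "0 \<le> k" "k < 1" "\<forall>x y. dist (f i t x) (f i t y) \<le> k * dist x y"
      by (blast dest: Lip_less1)
    show ?thesis
    proof (intro allI)
      fix x y :: 'a
      have "k * dist x y \<le> dist x y" using k by (simp add: mult_left_le_one_le)
      then show "dist (f i t x) (f i t y) \<le> dist x y" using k(3) by (meson order_trans)
    qed
  qed
  have ne1: "dist (f i 1 x) (f i 1 y) \<le> dist x y" if i: "i \<in> {1..N}" for i x y
  proof -
    have "((\<lambda>t. dist (f i t x) (f i t y)) \<longlongrightarrow> dist (f i 1 x) (f i 1 y)) (at_left 1)"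
      using lim[OF i] by (intro tendsto_dist)
    moreover have "eventually (\<lambda>t. dist (f i t x) (f i t y) \<le> dist x y) (at_left (1::real))"
      using ev by eventually_elim (use cont_t i in auto)
    ultimately show ?thesis by (intro tendsto_le[OF trivial_limit_at_left_real tendsto_const])
  qed
  have fixq: "f i 1 (q i) = q i" if i: "i \<in> {1..N}" for i
  proof -
    define p where "p t = (THE x. f i t x = x)" for t
    have pfix: "f i t (p t) = p t" if t: "t \<in> {0<..<1}" for t
    proof -
      have "Lip (f i t) < 1" using H2 that i by simp
      then obtain k where k: "0 \<le> k" "k < 1" "\<forall>x y. dist (f i t x) (f i t y) \<le> k * dist x y"
        by (blast dest: Lip_less1)
      have "\<exists>!x. f i t x = x" by (rule banach_fix_type[OF k])
      then show ?thesis unfolding p_def by (rule theI')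
    qed
    have pq: "(p \<longlongrightarrow> q i) (at_left 1)" using H3 i unfolding p_def by blast
    have "((\<lambda>t. dist (p t) (f i 1 (q i))) \<longlongrightarrow> 0) (at_left 1)"
    proof -
      have bnd: "norm (dist (p t) (f i 1 (q i))) \<le> dist (f i t (q i)) (f i 1 (q i)) + dist (p t) (q i)"
        if elim: "t \<in> {0<..<1}" for t
      proof -
        have e1: "dist (p t) (f i 1 (q i)) \<le> dist (f i t (p t)) (f i t (q i)) + dist (f i t (q i)) (f i 1 (q i))"
          using pfix[OF elim] dist_triangle[of "f i t (p t)" "f i 1 (q i)" "f i t (q i)"] by simp
        have e2: "dist (f i t (p t)) (f i t (q i)) \<le> dist (p t) (q i)"
          using cont_t[OF i] elim by auto
        have nrm: "norm (dist (p t) (f i 1 (q i))) = dist (p t) (f i 1 (q i))"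
          unfolding real_norm_def by (rule abs_of_nonneg[OF zero_le_dist])
        have "dist (f i t (p t)) (f i t (q i)) + dist (f i t (q i)) (f i 1 (q i)) \<le> dist (p t) (q i) + dist (f i t (q i)) (f i 1 (q i))"
          using e2 by (rule add_right_mono)
        then have "dist (p t) (f i 1 (q i)) \<le> dist (p t) (q i) + dist (f i t (q i)) (f i 1 (q i))"
          by (rule order_trans[OF e1])
        then show ?thesis unfolding nrm add.commute[of "dist (f i t (q i)) (f i 1 (q i))"] .
      qed
      have evb: "eventually (\<lambda>t. norm (dist (p t) (f i 1 (q i))) \<le> dist (f i t (q i)) (f i 1 (q i)) + dist (p t) (q i)) (at_left 1)"
        by (rule eventually_mono[OF ev bnd])
      have "((\<lambda>t. dist (f i t (q i)) (f i 1 (q i))) \<longlongrightarrow> 0) (at_left 1)"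
        by (rule tendsto_dist_iff[THEN iffD1, OF lim[OF i]])
      moreover have "((\<lambda>t. dist (p t) (q i)) \<longlongrightarrow> 0) (at_left 1)"
        by (rule tendsto_dist_iff[THEN iffD1, OF pq])
      ultimately have "((\<lambda>t. dist (f i t (q i)) (f i 1 (q i)) + dist (p t) (q i)) \<longlongrightarrow> 0 + 0) (at_left 1)"
        by (rule tendsto_add)
      then have "((\<lambda>t. dist (f i t (q i)) (f i 1 (q i)) + dist (p t) (q i)) \<longlongrightarrow> 0) (at_left 1)"
        by simp
      from Lim_null_comparison[OF evb this] show ?thesis .
    qed
    then have "(p \<longlongrightarrow> f i 1 (q i)) (at_left 1)" by (rule tendsto_dist_iff[THEN iffD2])
    from tendsto_unique[OF trivial_limit_at_left_real this pq] show ?thesis .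
  qed
  have contr_i: "\<exists>k. 0 \<le> k \<and> k < 1 \<and> (\<forall>x y. dist (f i 1 x) (f i 1 y) \<le> k * dist x y)"
    if i: "i \<in> {1..N}" and L: "Lip (f i 1) \<noteq> 1" for i
  proof -
    have "Lip (f i 1) \<le> ereal 1" using ne1[OF i] by (intro Lip_le) simp
    then have "Lip (f i 1) < 1" using L by (simp add: one_ereal_def)
    then show ?thesis by (rule Lip_less1)
  qed
  define I where "I = {i \<in> {1..N}. Lip (f i 1) \<noteq> 1}"
  obtain kk where kk: "\<forall>i\<in>I. 0 \<le> kk i \<and> kk i < 1 \<and> (\<forall>x y. dist (f i 1 x) (f i 1 y) \<le> kk i * dist x y)"
    using contr_i unfolding I_def by (metis (mono_tags, lifting) mem_Collect_eq)
  define c where "c = Max (insert 0 (kk ` I))"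
  have finI: "finite I" unfolding I_def by simp
  have c0: "0 \<le> c" unfolding c_def using finI by simp
  have c1: "c < 1" unfolding c_def using finI kk by (subst Max_less_iff) auto
  have kkc: "kk i \<le> c" if "i \<in> I" for i unfolding c_def using finI that by (intro Max_ge) auto
  define F where "F = {f i 1 | i. i \<in> {1..N}}"
  define G where "G = {f i 1 | i. i \<in> {1..N} \<and> Lip (f i 1) = 1}"
  define Q where "Q = q ` {1..N}"
  have Fim: "F = (\<lambda>i. f i 1) ` {1..N}" unfolding F_def by blast
  have compO: "compact (closure (orb F Q))"
  proof (rule core[where F=F and G=G and Q=Q and c=c])
    show "finite F" unfolding Fim by simp
    show "finite Q" unfolding Q_def by simp
    show "G \<subseteq> F" unfolding F_def G_def by blast
    show "\<forall>g\<in>F. continuous_on UNIV g" unfolding Fim using cont by auto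
    show "\<forall>g\<in>F. \<forall>x y. dist (g x) (g y) \<le> dist x y" unfolding Fim using ne1 by auto
    show "0 \<le> c" "c < 1" by (fact c0) (fact c1)
    show "\<forall>g\<in>F. g \<notin> G \<longrightarrow> (\<forall>x y. dist (g x) (g y) \<le> c * dist x y)"
    proof (intro ballI impI allI)
      fix g x y assume g: "g \<in> F" "g \<notin> G"
      then obtain i where i: "i \<in> {1..N}" "g = f i 1" unfolding F_def by blast
      then have "i \<in> I" using g(2) unfolding I_def G_def by blast
      then have "dist (g x) (g y) \<le> kk i * dist x y" using kk i by blast
      also have "\<dots> \<le> c * dist x y" using kkc[OF \<open>i \<in> I\<close>] by (simp add: mult_right_mono)
      finally show "dist (g x) (g y) \<le> c * dist x y" .
    qed
    show "\<forall>g\<in>F. \<exists>q\<in>Q. g q = q" unfolding Fim Q_def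
    proof
      fix g assume "g \<in> (\<lambda>i. f i 1) ` {1..N}"
      then obtain i where i: "i \<in> {1..N}" "g = f i 1" by blast
      then have "g (q i) = q i" using fixq by simp
      then show "\<exists>x\<in>q ` {1..N}. g x = x" using i(1) by blast
    qed
    show "compact_IFS (monoid_IFS G)" unfolding G_def by (fact Mcpt)
  qed
  have fixO: "hutchinson F (closure (orb F Q)) = closure (orb F Q)"
  proof (rule orb_fixed)
    show "\<forall>g\<in>F. continuous_on UNIV g" unfolding Fim using cont by auto
    show "\<forall>q\<in>Q. \<exists>g\<in>F. g q = q" unfolding Fim Q_def
    proof
      fix x assume "x \<in> q ` {1..N}"
      then obtain i where i: "i \<in> {1..N}" "x = q i" by blast
      then have "f i 1 x = x" using fixq by simp
      then show "\<exists>g\<in>(\<lambda>i. f i 1) ` {1..N}. g x = x" using i(1) by blast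
    qed
  qed
  have "Q \<subseteq> orb F Q" by (auto intro: orb.orb_base)
  then have QO: "Q \<subseteq> closure (orb F Q)" using closure_subset by (rule subset_trans)
  have AF: "is_lower_transition_attractor F Q A" using A unfolding F_def Q_def .
  then have min: "\<forall>B. hutchinson F B = B \<and> Q \<subseteq> B \<longrightarrow> A \<subseteq> B"
    and Aeq: "hutchinson F A = A" unfolding is_lower_transition_attractor_def by auto
  have AO: "A \<subseteq> closure (orb F Q)" using min fixO QO by blast
  have "closed (hutchinson F A)" unfolding hutchinson_def by simp
  then have "closed A" unfolding Aeq .
  then have "compact (closure (orb F Q) \<inter> A)" using compO by (rule compact_Int_closed[rotated])
  moreover have "closure (orb F Q) \<inter> A = A" using AO by blast
  ultimately show ?thesis by simp
qed

end
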